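(* Fix $n\in\mathbb{N}$, let $U_1,\dots,U_n$ be independent uniform random variables on $[0,1]$, let $I(t)=(f_1(t;U_1),\dots,f_n(t;U_n))$, and define the uniform Mallows process $\mathcal{M}^U_t=\Phi(I(t))$, $t\ge0$. Then $(\mathcal{M}^U_t)_{t\ge0}$ is a regular Mallows process.
   Context: For $j\in\mathbb{N}$, $u\in(0,1)$: $f_j(t;u)=\lfloor\log(1-u(1-t^j))/\log t\rfloor$ for $t\notin\{0,1\}$, $f_j(0;u)=0$, $f_j(1;u)=\lfloor ju\rfloor$. $\mathcal{E}_n=\{(I_1,\dots,I_n)\in\mathbb{Z}^n:0\le I_j\le j-1\}$; $\mathrm{Inv}_j(\sigma)=|\{i\in[j-1]:\sigma(i)>\sigma(j)\}|$, $\mathrm{Inv}=\sum_j\mathrm{Inv}_j$; $\Phi:\mathcal{E}_n\to\mathcal{S}_n$ the unique bijection with $\mathrm{Inv}_j(\Phi(I))=I_j$ (for $k=n,\dots,1$: $[n]\setminus\{\sigma(n),\dots,\sigma(k+1)\}=\{x_1<\dots<x_k\}$, $\sigma(k)=x_{k-I_k}$). Mallows distribution $\pi_{n,q}(\sigma)=q^{\mathrm{Inv}(\sigma)}/\prod_{k=1}^n\sum_{\ell=0}^{k-1}q^\ell$ ($0^0=1$); a Mallows process is an $\mathcal{S}_n$-valued càdlàg process with $\mathcal{M}_t\sim\pi_{n,t}$ for all $t$. Regular: each $t\mapsto\mathrm{Inv}_j(\mathcal{M}_t)$ nondecreasing, $\mathrm{Inv}(\mathcal{M}_t)\le\mathrm{Inv}(\mathcal{M}_{t-})+1$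 for all $t$, and the processes $(\mathrm{Inv}_j(\mathcal{M}_t))_{t\ge0}$, $j\in[n]$, mutually independent. *)

theory Defs
  imports "HOL-Probability.Probability" "HOL-Combinatorics.Permutations"
begin

text \<open>Permutations of [n] are functions nat => nat that permute {1..n}.\<close>

definition fj :: "nat \<Rightarrow> real \<Rightarrow> real \<Rightarrow> int" where
  "fj j t u = (if t = 0 then 0
               else if t = 1 then \<lfloor>real j * u\<rfloor>
               else \<lfloor>ln (1 - u * (1 - t ^ j)) / ln t\<rfloor>)"

definition InvJ :: "nat \<Rightarrow> (nat \<Rightarrow> nat) \<Rightarrow> nat" where
  "InvJ j \<sigma> = card {i \<in> {1..<j}. \<sigma> i > \<sigma> j}"

definition Inv :: "nat \<Rightarrow> (nat \<Rightarrow> nat) \<Rightarrow> nat" where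
  "Inv n \<sigma> = (\<Sum>j\<in>{1..n}. InvJ j \<sigma>)"

definition Ecodes :: "nat \<Rightarrow> (nat \<Rightarrow> int) set" where
  "Ecodes n = {I. \<forall>j\<in>{1..n}. 0 \<le> I j \<and> I j \<le> int j - 1}"

definition Phi :: "nat \<Rightarrow> (nat \<Rightarrow> int) \<Rightarrow> (nat \<Rightarrow> nat)" where
  "Phi n I = (THE \<sigma>. \<sigma> permutes {1..n} \<and> (\<forall>j\<in>{1..n}. int (InvJ j \<sigma>) = I j))"

definition mallows :: "nat \<Rightarrow> real \<Rightarrow> (nat \<Rightarrow> nat) \<Rightarrow> real" where
  "mallows n q \<sigma> = q ^ Inv n \<sigma> / (\<Prod>k\<in>{1..n}. \<Sum>l<k. q ^ l)"

definition cadlag_discrete :: "(real \<Rightarrow> 'a) \<Rightarrow> bool" where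
  "cadlag_discrete X \<longleftrightarrow>
     (\<forall>t\<ge>0. \<forall>\<^sub>F s in at_right t. X s = X t) \<and>
     (\<forall>t>0. \<exists>a. \<forall>\<^sub>F s in at_left t. X s = a)"

text \<open>Left limit X(t-), with the convention X(0-) = X(0).\<close>
definition left_lim :: "(real \<Rightarrow> 'a) \<Rightarrow> real \<Rightarrow> 'a" where
  "left_lim X t = (if t \<le> 0 then X 0 else (THE a. \<forall>\<^sub>F s in at_left t. X s = a))"

definition mallows_process ::
  "'w measure \<Rightarrow> nat \<Rightarrow> (real \<Rightarrow> 'w \<Rightarrow> (nat \<Rightarrow> nat)) \<Rightarrow> bool" where
  "mallows_process M n X \<longleftrightarrow>
     (AE \<omega> in M. (\<forall>t\<ge>0. X t \<omega> permutes {1..n}) \<and> cadlag_discrete (\<lambda>t. X t \<omega>)) \<and>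
     (\<forall>t\<ge>0. \<forall>\<sigma>. \<sigma> permutes {1..n} \<longrightarrow>
        {\<omega> \<in> space M. X t \<omega> = \<sigma>} \<in> sets M \<and>
        measure M {\<omega> \<in> space M. X t \<omega> = \<sigma>} = mallows n t \<sigma>)"

definition regular_mallows_process ::
  "'w measure \<Rightarrow> nat \<Rightarrow> (real \<Rightarrow> 'w \<Rightarrow> (nat \<Rightarrow> nat)) \<Rightarrow> bool" where
  "regular_mallows_process M n X \<longleftrightarrow>
     mallows_process M n X \<and>
     (AE \<omega> in M. (\<forall>j\<in>{1..n}. \<forall>s t. 0 \<le> s \<longrightarrow> s \<le> t \<longrightarrow>
                      InvJ j (X s \<omega>) \<le> InvJ j (X t \<omega>)) \<and>
                  (\<forall>t\<ge>0. Inv n (X t \<omega>) \<le> Inv n (left_lim (\<lambda>s. X s \<omega>) t) + 1)) \<and>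
     prob_space.indep_vars M (\<lambda>_. PiM {0..} (\<lambda>_. count_space UNIV))
        (\<lambda>j \<omega>. restrict (\<lambda>t. InvJ j (X t \<omega>)) {0..}) {1..n}"

definition uniform_mallows :: "nat \<Rightarrow> (nat \<Rightarrow> 'w \<Rightarrow> real) \<Rightarrow> real \<Rightarrow> 'w \<Rightarrow> (nat \<Rightarrow> nat)" where
  "uniform_mallows n U t \<omega> = Phi n (\<lambda>j. fj j t (U j \<omega>))"

end

theory Submission
  imports Defs
begin


lemma perm_inj_on: "\<sigma> permutes S \<Longrightarrow> i \<noteq> j \<Longrightarrow> \<sigma> i \<noteq> \<sigma> j"
  by (metis permutes_inj injD)

lemma order_agree_step:
  fixes \<sigma> \<tau> :: "nat \<Rightarrow> nat"
  assumes ps: "\<sigma> permutes S" and pt: "\<tau> permutes S"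
    and IH: "\<forall>i\<in>{1..<j}. \<forall>i'\<in>{1..<j}. (\<sigma> i < \<sigma> i' \<longleftrightarrow> \<tau> i < \<tau> i')"
    and eq: "InvJ j \<sigma> = InvJ j \<tau>"
  shows "\<forall>i\<in>{1..<j}. (\<sigma> i < \<sigma> j \<longleftrightarrow> \<tau> i < \<tau> j)"
proof -
  define A where "A = {i \<in> {1..<j}. \<sigma> i > \<sigma> j}"
  define B where "B = {i \<in> {1..<j}. \<tau> i > \<tau> j}"
  have cAB: "card A = card B" using eq unfolding InvJ_def A_def B_def by simp
  have fin: "finite A" "finite B" unfolding A_def B_def by auto
  have comp: "A \<subseteq> B \<or> B \<subseteq> A"
  proof (rule ccontr)
    assume "\<not> (A \<subseteq> B \<or> B \<subseteq> A)"
    then obtain x y where x: "x \<in> A" "x \<notin> B" and y: "y \<in> B" "y \<notin> A" by blast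
    have xy: "x \<noteq> y" using x y by blast
    have xr: "x \<in> {1..<j}" and yr: "y \<in> {1..<j}" using x y unfolding A_def B_def by auto
    show False
    proof (cases "\<sigma> x < \<sigma> y")
      case True
      then have "\<sigma> y > \<sigma> j" using x unfolding A_def by auto
      then show False using y yr unfolding A_def by auto
    next
      case False
      then have "\<sigma> y < \<sigma> x" using perm_inj_on[OF ps xy] by auto
      then have "\<tau> y < \<tau> x" using IH xr yr by auto
      moreover have "\<tau> y > \<tau> j" using y unfolding B_def by auto
      ultimately show False using x xr unfolding B_def by auto
    qed
  qed
  have AB: "A = B"
    using comp cAB fin by (metis card_subset_eq)
  show ?thesis
  proof
    fix i assume i: "i \<in> {1..<j}"
    have ij: "i \<noteq> j" using i by auto
    have "\<sigma> i < \<sigma> j \<longleftrightarrow> i \<notin> A" using perm_inj_on[OF ps ij] i unfolding A_def by auto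
    moreover have "\<tau> i < \<tau> j \<longleftrightarrow> i \<notin> B" using perm_inj_on[OF pt ij] i unfolding B_def by auto
    ultimately show "\<sigma> i < \<sigma> j \<longleftrightarrow> \<tau> i < \<tau> j" using AB by simp
  qed
qed

lemma order_agree:
  fixes \<sigma> \<tau> :: "nat \<Rightarrow> nat"
  assumes ps: "\<sigma> permutes {1..n}" and pt: "\<tau> permutes {1..n}"
    and eq: "\<forall>j\<in>{1..n}. InvJ j \<sigma> = InvJ j \<tau>"
  shows "j \<le> n + 1 \<Longrightarrow> \<forall>i\<in>{1..<j}. \<forall>i'\<in>{1..<j}. (\<sigma> i < \<sigma> i' \<longleftrightarrow> \<tau> i < \<tau> i')"
proof (induction j)
  case 0
  then show ?case by simp
next
  case (Suc j)
  then have IH: "\<forall>i\<in>{1..<j}. \<forall>i'\<in>{1..<j}. (\<sigma> i < \<sigma> i' \<longleftrightarrow> \<tau> i < \<tau> i')" by simp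
  show ?case
  proof (cases "j = 0")
    case True then show ?thesis by simp
  next
    case False
    then have "j \<in> {1..n}" using Suc.prems by auto
    then have st: "\<forall>i\<in>{1..<j}. (\<sigma> i < \<sigma> j \<longleftrightarrow> \<tau> i < \<tau> j)"
      using order_agree_step[OF ps pt IH] eq by auto
    have st2: "\<forall>i\<in>{1..<j}. (\<sigma> j < \<sigma> i \<longleftrightarrow> \<tau> j < \<tau> i)"
    proof
      fix i assume i: "i \<in> {1..<j}"
      have ij: "i \<noteq> j" using i by auto
      show "\<sigma> j < \<sigma> i \<longleftrightarrow> \<tau> j < \<tau> i"
        using st[rule_format, OF i] perm_inj_on[OF ps ij] perm_inj_on[OF pt ij] by linarith
    qed
    show ?thesis
    proof (intro ballI)
      fix i i' assume i: "i \<in> {1..<Suc j}" and i': "i' \<in> {1..<Suc j}"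
      show "\<sigma> i < \<sigma> i' \<longleftrightarrow> \<tau> i < \<tau> i'"
      proof (cases "i = j")
        case True
        show ?thesis
        proof (cases "i' = j")
          case True then show ?thesis using \<open>i = j\<close> by simp
        next
          case False then have "i' \<in> {1..<j}" using i' by auto
          then show ?thesis using st2 True by auto
        qed
      next
        case False
        then have ii: "i \<in> {1..<j}" using i by auto
        show ?thesis
        proof (cases "i' = j")
          case True then show ?thesis using st ii by auto
        next
          case False then have "i' \<in> {1..<j}" using i' by auto
          then show ?thesis using IH ii by auto
        qed
      qed
    qed
  qed
qed

lemma perm_value_card:
  fixes \<sigma> :: "nat \<Rightarrow> nat"
  assumes ps: "\<sigma> permutes {1..n}" and j: "j \<in> {1..n}"
  shows "\<sigma> j = card {i \<in> {1..n}. \<sigma> i \<le> \<sigma> j}"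
proof -
  have bij: "bij_betw \<sigma> {1..n} {1..n}" using ps by (rule permutes_imp_bij)
  have "\<sigma> ` {i \<in> {1..n}. \<sigma> i \<le> \<sigma> j} = {v \<in> \<sigma> ` {1..n}. v \<le> \<sigma> j}"
    by auto
  then have "\<sigma> ` {i \<in> {1..n}. \<sigma> i \<le> \<sigma> j} = {v \<in> {1..n}. v \<le> \<sigma> j}"
    using bij by (simp add: bij_betw_def)
  moreover have "inj_on \<sigma> {i \<in> {1..n}. \<sigma> i \<le> \<sigma> j}"
    by (rule inj_on_subset[OF bij_betw_imp_inj_on[OF bij]]) auto
  moreover have "{v \<in> {1..n}. v \<le> \<sigma> j} = {1..\<sigma> j}"
  proof -
    have "\<sigma> j \<in> {1..n}" using bij j by (auto simp: bij_betw_def)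
    then show ?thesis by auto
  qed
  ultimately show ?thesis by (metis card_atLeastAtMost card_image diff_Suc_1)
qed

lemma InvJ_inj:
  fixes \<sigma> \<tau> :: "nat \<Rightarrow> nat"
  assumes ps: "\<sigma> permutes {1..n}" and pt: "\<tau> permutes {1..n}"
    and eq: "\<forall>j\<in>{1..n}. InvJ j \<sigma> = InvJ j \<tau>"
  shows "\<sigma> = \<tau>"
proof
  fix j
  show "\<sigma> j = \<tau> j"
  proof (cases "j \<in> {1..n}")
    case False
    then show ?thesis using ps pt by (simp add: permutes_not_in)
  next
    case True
    have OA: "\<forall>i\<in>{1..<n+1}. \<forall>i'\<in>{1..<n+1}. (\<sigma> i < \<sigma> i' \<longleftrightarrow> \<tau> i < \<tau> i')"
      using order_agree[OF ps pt eq, of "n+1"] by simp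
    have "{i \<in> {1..n}. \<sigma> i \<le> \<sigma> j} = {i \<in> {1..n}. \<tau> i \<le> \<tau> j}"
      using OA True by (auto simp: not_less[symmetric])
    then show ?thesis using perm_value_card[OF ps True] perm_value_card[OF pt True] by simp
  qed
qed

lemma InvJ_le: "j \<ge> 1 \<Longrightarrow> InvJ j \<sigma> \<le> j - 1"
proof -
  have "InvJ j \<sigma> \<le> card {1..<j}" unfolding InvJ_def by (intro card_mono) auto
  then show "InvJ j \<sigma> \<le> j - 1" by simp
qed

lemma InvJ_le_int: "j \<ge> 1 \<Longrightarrow> int (InvJ j \<sigma>) \<le> int j - 1"
  using InvJ_le[of j \<sigma>] by linarith

definition code :: "nat \<Rightarrow> (nat \<Rightarrow> nat) \<Rightarrow> (nat \<Rightarrow> int)" where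
  "code n \<sigma> = restrict (\<lambda>j. int (InvJ j \<sigma>)) {1..n}"

definition Cset :: "nat \<Rightarrow> (nat \<Rightarrow> int) set" where
  "Cset n = PiE {1..n} (\<lambda>j. {0..int j - 1})"

lemma card_Cset: "card (Cset n) = fact n"
proof -
  have "card (Cset n) = (\<Prod>j\<in>{1..n}. card {0..int j - 1})"
    unfolding Cset_def by (simp add: card_PiE)
  also have "\<dots> = (\<Prod>j\<in>{1..n}. j)" by (intro prod.cong) auto
  also have "\<dots> = fact n" by (simp add: fact_prod)
  finally show ?thesis .
qed

lemma code_surj: "code n ` {\<sigma>. \<sigma> permutes {1..n}} = Cset n"
proof -
  have sub: "code n ` {\<sigma>. \<sigma> permutes {1..n}} \<subseteq> Cset n"
  proof (rule image_subsetI)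
    fix \<sigma> assume "\<sigma> \<in> {\<sigma>. \<sigma> permutes {1..n}}"
    have "\<And>j. j \<in> {1..n} \<Longrightarrow> int (InvJ j \<sigma>) \<in> {0..int j - 1}"
      using InvJ_le_int by auto
    then show "code n \<sigma> \<in> Cset n" unfolding code_def Cset_def by auto
  qed
  have inj: "inj_on (code n) {\<sigma>. \<sigma> permutes {1..n}}"
  proof (rule inj_onI)
    fix \<sigma> \<tau> assume "\<sigma> \<in> {\<sigma>. \<sigma> permutes {1..n}}" "\<tau> \<in> {\<sigma>. \<sigma> permutes {1..n}}" "code n \<sigma> = code n \<tau>"
    then show "\<sigma> = \<tau>"
      by (intro InvJ_inj[of _ n]) (auto simp: code_def restrict_def fun_eq_iff split: if_splits)
  qed
  have "card (code n ` {\<sigma>. \<sigma> permutes {1..n}}) = fact n"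
    using card_image[OF inj] by (simp add: card_permutations)
  then show ?thesis using sub card_Cset
    by (metis card_subset_eq finite_PiE finite_atLeastAtMost_int finite_atLeastAtMost Cset_def)
qed

lemma code_exists:
  assumes "\<forall>j\<in>{1..n}. 0 \<le> I j \<and> I j \<le> int j - 1"
  shows "\<exists>\<sigma>. \<sigma> permutes {1..n} \<and> (\<forall>j\<in>{1..n}. int (InvJ j \<sigma>) = I j)"
proof -
  have "restrict I {1..n} \<in> Cset n" using assms unfolding Cset_def by auto
  then obtain \<sigma> where "\<sigma> permutes {1..n}" "code n \<sigma> = restrict I {1..n}"
    using code_surj by (metis (no_types, lifting) imageE mem_Collect_eq)
  then show ?thesis unfolding code_def by (metis restrict_apply')
qed

lemma Phi_props:
  assumes "\<forall>j\<in>{1..n}. 0 \<le> I j \<and> I j \<le> int j - 1"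
  shows "Phi n I permutes {1..n} \<and> (\<forall>j\<in>{1..n}. int (InvJ j (Phi n I)) = I j)"
proof -
  obtain \<sigma> where s: "\<sigma> permutes {1..n} \<and> (\<forall>j\<in>{1..n}. int (InvJ j \<sigma>) = I j)"
    using code_exists[OF assms] by blast
  show ?thesis unfolding Phi_def
  proof (rule theI[of _ \<sigma>])
    show "\<sigma> permutes {1..n} \<and> (\<forall>j\<in>{1..n}. int (InvJ j \<sigma>) = I j)" by (rule s)
  next
    fix \<tau> assume "\<tau> permutes {1..n} \<and> (\<forall>j\<in>{1..n}. int (InvJ j \<tau>) = I j)"
    note t = this
    have "\<forall>j\<in>{1..n}. InvJ j \<tau> = InvJ j \<sigma>"
    proof
      fix j assume "j \<in> {1..n}"
      then have "int (InvJ j \<tau>) = int (InvJ j \<sigma>)" using s t by simp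
      then show "InvJ j \<tau> = InvJ j \<sigma>" by simp
    qed
    then show "\<tau> = \<sigma>" using s t InvJ_inj[of \<tau> n \<sigma>] by blast
  qed
qed

lemma Phi_eq_iff:
  assumes "\<forall>j\<in>{1..n}. 0 \<le> I j \<and> I j \<le> int j - 1" and ps: "\<sigma> permutes {1..n}"
  shows "Phi n I = \<sigma> \<longleftrightarrow> (\<forall>j\<in>{1..n}. I j = int (InvJ j \<sigma>))"
proof
  assume "Phi n I = \<sigma>" then show "\<forall>j\<in>{1..n}. I j = int (InvJ j \<sigma>)"
    using Phi_props[OF assms(1)] by auto
next
  assume h: "\<forall>j\<in>{1..n}. I j = int (InvJ j \<sigma>)"
  show "Phi n I = \<sigma>"
    using Phi_props[OF assms(1)] h InvJ_inj[OF _ ps, of "Phi n I"] by auto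
qed

lemma Phi_cong: "(\<forall>j\<in>{1..n}. I j = I' j) \<Longrightarrow> Phi n I = Phi n I'"
  unfolding Phi_def by (metis (no_types, lifting))



definition SS :: "nat \<Rightarrow> real \<Rightarrow> real" where
  "SS m t = (\<Sum>l<m. t ^ l)"

definition phi :: "nat \<Rightarrow> nat \<Rightarrow> real \<Rightarrow> real" where
  "phi j k t = SS k t / SS j t"

lemma SS_ge1: "m \<ge> 1 \<Longrightarrow> t \<ge> 0 \<Longrightarrow> SS m t \<ge> 1"
proof -
  assume m: "m \<ge> 1" and t: "t \<ge> 0"
  then obtain m' where m': "m = Suc m'" by (cases m) auto
  have "SS m t = t ^ 0 + (\<Sum>l<m'. t ^ Suc l)"
    unfolding SS_def m' by (rule sum.lessThan_Suc_shift)
  moreover have "(\<Sum>l<m'. t ^ Suc l) \<ge> 0" using t by (intro sum_nonneg) auto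
  ultimately show ?thesis by simp
qed

lemma SS_nonneg: "t \<ge> 0 \<Longrightarrow> SS m t \<ge> 0"
  unfolding SS_def by (intro sum_nonneg) auto

lemma SS_Suc: "SS (Suc m) t = SS m t + t ^ m"
  unfolding SS_def by simp

lemma SS_mono: "t \<ge> 0 \<Longrightarrow> m \<le> m' \<Longrightarrow> SS m t \<le> SS m' t"
  unfolding SS_def by (intro sum_mono2) auto

lemma SS_0: "SS 0 t = 0" unfolding SS_def by simp

lemma SS_at0: "m \<ge> 1 \<Longrightarrow> SS m 0 = 1"
proof -
  assume "m \<ge> 1"
  then obtain m' where "m = Suc m'" by (cases m) auto
  then show ?thesis unfolding SS_def by (induction m' arbitrary: m) auto
qed

lemma SS_at1: "SS m 1 = real m" unfolding SS_def by simp

lemma SS_gp: "t \<noteq> 1 \<Longrightarrow> SS m t = (1 - t ^ m) / (1 - t)"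
  unfolding SS_def by (simp add: sum_gp_strict)

lemma phi_0: "phi j 0 t = 0" unfolding phi_def SS_0 by simp

lemma phi_j: "j \<ge> 1 \<Longrightarrow> t \<ge> 0 \<Longrightarrow> phi j j t = 1"
  unfolding phi_def using SS_ge1[of j t] by simp

lemma phi_nonneg: "t \<ge> 0 \<Longrightarrow> phi j k t \<ge> 0"
  unfolding phi_def using SS_nonneg by simp

lemma phi_mono_k: "j \<ge> 1 \<Longrightarrow> t \<ge> 0 \<Longrightarrow> k \<le> k' \<Longrightarrow> phi j k t \<le> phi j k' t"
  unfolding phi_def using SS_ge1[of j t] SS_mono[of t k k']
  by (simp add: divide_right_mono)

lemma phi_le1: "j \<ge> 1 \<Longrightarrow> t \<ge> 0 \<Longrightarrow> k \<le> j \<Longrightarrow> phi j k t \<le> 1"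
  using phi_mono_k[of j t k j] phi_j by simp

lemma phi_Suc_diff: "j \<ge> 1 \<Longrightarrow> t \<ge> 0 \<Longrightarrow> phi j (Suc c) t - phi j c t = t ^ c / SS j t"
  unfolding phi_def SS_Suc by (simp add: add_divide_distrib)

lemma phi_strict_k: "j \<ge> 1 \<Longrightarrow> t > 0 \<Longrightarrow> k < k' \<Longrightarrow> phi j k t < phi j k' t"
proof -
  assume j: "j \<ge> 1" and t: "t > 0" and kk: "k < k'"
  have "phi j (Suc k) t - phi j k t > 0" using phi_Suc_diff[of j t k] SS_ge1[of j t] j t by simp
  moreover have "phi j (Suc k) t \<le> phi j k' t" using phi_mono_k[of j t "Suc k" k'] j t kk by simp
  ultimately show ?thesis by simp
qed

lemma pow_swap_le:
  fixes s t :: real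
  assumes "0 \<le> s" "s \<le> t" "a \<le> b"
  shows "t ^ a * s ^ b \<le> s ^ a * t ^ b"
proof -
  have "t ^ a * s ^ b = (s ^ a * t ^ a) * s ^ (b - a)"
    using assms by (simp add: power_add[symmetric] mult_ac flip: le_add_diff_inverse)
  also have "\<dots> \<le> (s ^ a * t ^ a) * t ^ (b - a)"
    using assms by (intro mult_left_mono power_mono) auto
  also have "\<dots> = s ^ a * t ^ b"
    using assms by (simp add: power_add[symmetric] mult_ac flip: le_add_diff_inverse)
  finally show ?thesis .
qed

lemma cross_diff:
  fixes s t :: real
  assumes "k \<le> j"
  shows "SS k s * SS j t - SS k t * SS j s =
     (\<Sum>a<k. \<Sum>b\<in>{k..<j}. s ^ a * t ^ b - t ^ a * s ^ b)"
proof -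
  have split: "\<And>x. SS j x = SS k x + (\<Sum>b\<in>{k..<j}. x ^ b)"
    unfolding SS_def using assms
    by (metis lessThan_atLeast0 sum.atLeastLessThan_concat zero_le)
  have "SS k s * SS j t - SS k t * SS j s =
      SS k s * (\<Sum>b\<in>{k..<j}. t ^ b) - SS k t * (\<Sum>b\<in>{k..<j}. s ^ b)"
    by (simp only: split) (simp add: algebra_simps)
  also have "\<dots> = (\<Sum>a<k. \<Sum>b\<in>{k..<j}. s ^ a * t ^ b) - (\<Sum>a<k. \<Sum>b\<in>{k..<j}. t ^ a * s ^ b)"
    unfolding SS_def by (simp only: sum_product)
  also have "\<dots> = (\<Sum>a<k. \<Sum>b\<in>{k..<j}. s ^ a * t ^ b - t ^ a * s ^ b)"
    by (simp add: sum_subtractf)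
  finally show ?thesis .
qed

lemma cross_nonneg:
  fixes s t :: real
  assumes "k \<le> j" "0 \<le> s" "s \<le> t"
  shows "SS k t * SS j s \<le> SS k s * SS j t"
proof -
  have "0 \<le> (\<Sum>a<k. \<Sum>b\<in>{k..<j}. s ^ a * t ^ b - t ^ a * s ^ b)"
    using assms pow_swap_le[of s t] by (intro sum_nonneg) auto
  then show ?thesis using cross_diff[OF assms(1), of s t] by simp
qed

lemma cross_pos:
  fixes s t :: real
  assumes "1 \<le> k" "k < j" "0 \<le> s" "s < t"
  shows "SS k t * SS j s < SS k s * SS j t"
proof -
  have "0 < (\<Sum>a<k. \<Sum>b\<in>{k..<j}. s ^ a * t ^ b - t ^ a * s ^ b)"
  proof (rule sum_pos2)
    show "0 \<in> {..<k}" using assms by auto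
    show "0 < (\<Sum>b\<in>{k..<j}. s ^ 0 * t ^ b - t ^ 0 * s ^ b)"
    proof (rule sum_pos2)
      show "k \<in> {k..<j}" using assms by auto
      show "0 < s ^ 0 * t ^ k - t ^ 0 * s ^ k"
        using assms power_strict_mono[of s t k] by simp
      show "\<And>i. i \<in> {k..<j} \<Longrightarrow> 0 \<le> s ^ 0 * t ^ i - t ^ 0 * s ^ i"
        using assms power_mono[of s t] by simp
    qed simp
    show "\<And>i. i \<in> {..<k} \<Longrightarrow> 0 \<le> (\<Sum>b\<in>{k..<j}. s ^ i * t ^ b - t ^ i * s ^ b)"
      using assms pow_swap_le[of s t] by (intro sum_nonneg) auto
  qed simp
  then show ?thesis using cross_diff[of k j s t] assms by simp
qed

lemma phi_anti:
  assumes "j \<ge> 1" "k \<le> j" "0 \<le> s" "s \<le> t"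
  shows "phi j k t \<le> phi j k s"
proof -
  have ps: "SS j s > 0" "SS j t > 0" using SS_ge1[of j s] SS_ge1[of j t] assms by auto
  show ?thesis unfolding phi_def using cross_nonneg[OF assms(2-4)] ps
    by (simp add: divide_simps mult_ac)
qed

lemma phi_strict_anti:
  assumes "1 \<le> k" "k < j" "0 \<le> s" "s < t"
  shows "phi j k t < phi j k s"
proof -
  have ps: "SS j s > 0" "SS j t > 0" using SS_ge1[of j s] SS_ge1[of j t] assms by auto
  show ?thesis unfolding phi_def using cross_pos[OF assms] ps
    by (simp add: divide_simps mult_ac)
qed

lemma SS_cont: "continuous_on UNIV (SS m)"
  unfolding SS_def by (intro continuous_intros)

lemma phi_cont: "j \<ge> 1 \<Longrightarrow> continuous_on {0..} (phi j k)"
  unfolding phi_def SS_def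
  by (intro continuous_intros) (use SS_ge1 in \<open>fastforce simp: SS_def\<close>)

lemma fj_key:
  fixes u t :: real
  assumes j: "j \<ge> 1" and u: "0 \<le> u" "u < 1" and t: "t \<ge> 0" and k: "k \<le> j"
  shows "int k \<le> fj j t u \<longleftrightarrow> phi j k t \<le> u"
proof (cases "t = 0")
  case True
  show ?thesis
  proof (cases "k = 0")
    case True then show ?thesis using \<open>t = 0\<close> u by (simp add: fj_def phi_0)
  next
    case False then show ?thesis using \<open>t = 0\<close> u j
      by (simp add: fj_def phi_def SS_at0)
  qed
next
  case t0: False
  show ?thesis
  proof (cases "t = 1")
    case True
    have "int k \<le> \<lfloor>real j * u\<rfloor> \<longleftrightarrow> real k \<le> real j * u" by (simp add: le_floor_iff)
    also have "\<dots> \<longleftrightarrow> real k / real j \<le> u" using j by (simp add: divide_simps mult_ac)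
    finally show ?thesis using True by (simp add: fj_def phi_def SS_at1)
  next
    case t1: False
    have tp: "t > 0" using t t0 by simp
    define w where "w = 1 - u * (1 - t ^ j)"
    have fj: "fj j t u = \<lfloor>ln w / ln t\<rfloor>" using t0 t1 unfolding fj_def w_def by simp
    have tjn: "t ^ j \<noteq> 1"
    proof (cases "t < 1")
      case True then have "t ^ j < 1" using tp j by (simp add: power_less_one_iff)
      then show ?thesis by simp
    next
      case False then have "t ^ j > 1" using t1 j by (simp add: one_less_power)
      then show ?thesis by simp
    qed
    have t1': "1 - t \<noteq> 0" "1 - t ^ j \<noteq> 0" using t1 tjn by auto
    have ph: "phi j k t = (1 - t ^ k) / (1 - t ^ j)"
      unfolding phi_def SS_gp[OF t1] using t1' by (simp add: divide_simps)
    have "int k \<le> fj j t u \<longleftrightarrow> real k \<le> ln w / ln t" unfolding fj by (simp add: le_floor_iff)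
    show ?thesis
    proof (cases "t < 1")
      case True
      have tj: "t ^ j < 1" using True tp j by (simp add: power_less_one_iff)
      have tk: "t ^ k \<ge> t ^ j" using True tp k by (simp add: power_decreasing)
      have wpos: "w > 0"
      proof -
        have "u * (1 - t ^ j) < 1 * 1" using u tj tp by (intro mult_strict_mono) auto
        then show ?thesis unfolding w_def by simp
      qed
      have lt: "ln t < 0" using True tp by simp
      have "real k \<le> ln w / ln t \<longleftrightarrow> ln w \<le> real k * ln t" using lt by (simp add: neg_le_divide_eq)
      also have "\<dots> \<longleftrightarrow> ln w \<le> ln (t ^ k)" using tp by (simp add: ln_realpow)
      also have "\<dots> \<longleftrightarrow> w \<le> t ^ k" using wpos tp by simp
      also have "\<dots> \<longleftrightarrow> (1 - t ^ k) \<le> u * (1 - t ^ j)" unfolding w_def by linarith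
      also have "\<dots> \<longleftrightarrow> (1 - t ^ k) / (1 - t ^ j) \<le> u" using tj by (simp add: divide_le_eq)
      finally show ?thesis using \<open>int k \<le> fj j t u \<longleftrightarrow> _\<close> ph by simp
    next
      case False
      then have tg: "t > 1" using t1 by simp
      have tj: "t ^ j > 1" using tg j by (simp add: one_less_power)
      have wpos: "w \<ge> 1" unfolding w_def using u tj mult_left_mono[of 1 "t ^ j" u] by (simp add: algebra_simps)
      have lt: "ln t > 0" using tg by simp
      have "real k \<le> ln w / ln t \<longleftrightarrow> real k * ln t \<le> ln w" using lt by (simp add: le_divide_eq)
      also have "\<dots> \<longleftrightarrow> ln (t ^ k) \<le> ln w" using tp by (simp add: ln_realpow)
      also have "\<dots> \<longleftrightarrow> t ^ k \<le> w" using wpos tp by simp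
      also have "\<dots> \<longleftrightarrow> (t ^ k - 1) \<le> u * (t ^ j - 1)" unfolding w_def by (simp add: algebra_simps)
      also have "\<dots> \<longleftrightarrow> (t ^ k - 1) / (t ^ j - 1) \<le> u" using tj by (simp add: divide_le_eq)
      also have "(t ^ k - 1) / (t ^ j - 1) = (1 - t ^ k) / (1 - t ^ j)"
        by (metis minus_diff_eq minus_divide_divide)
      finally show ?thesis using \<open>int k \<le> fj j t u \<longleftrightarrow> _\<close> ph by simp
    qed
  qed
qed



context
  fixes j :: nat and u :: real
  assumes j: "j \<ge> 1" and u0: "0 \<le> u" and u1: "u < 1"
begin

lemma fj_range: "t \<ge> 0 \<Longrightarrow> 0 \<le> fj j t u \<and> fj j t u \<le> int j - 1"
proof -
  assume t: "t \<ge> 0"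
  have "int 0 \<le> fj j t u" using fj_key[OF j u0 u1 t, of 0] phi_0 u0 by simp
  moreover have "\<not> int j \<le> fj j t u" using fj_key[OF j u0 u1 t, of j] phi_j[OF j t] u1 by simp
  ultimately show ?thesis by simp
qed

lemma fj_card: "t \<ge> 0 \<Longrightarrow> fj j t u = int (card {k \<in> {1..<j}. phi j k t \<le> u})"
proof -
  assume t: "t \<ge> 0"
  define m where "m = fj j t u"
  have mr: "0 \<le> m" "m \<le> int j - 1" using fj_range[OF t] unfolding m_def by auto
  have "{k \<in> {1..<j}. phi j k t \<le> u} = {k \<in> {1..<j}. int k \<le> m}"
    using fj_key[OF j u0 u1 t] unfolding m_def by auto
  also have "\<dots> = {1..nat m}" using mr by auto
  finally have "card {k \<in> {1..<j}. phi j k t \<le> u} = nat m" by simp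
  then show ?thesis using mr m_def by simp
qed

lemma fj_mono: "0 \<le> s \<Longrightarrow> s \<le> t \<Longrightarrow> fj j s u \<le> fj j t u"
proof -
  assume s: "0 \<le> s" "s \<le> t"
  have "{k \<in> {1..<j}. phi j k s \<le> u} \<subseteq> {k \<in> {1..<j}. phi j k t \<le> u}"
  proof (intro subsetI)
    fix x assume x: "x \<in> {k \<in> {1..<j}. phi j k s \<le> u}"
    then have "phi j x t \<le> phi j x s" using phi_anti[OF j _ s] by auto
    then show "x \<in> {k \<in> {1..<j}. phi j k t \<le> u}" using x by auto
  qed
  then have "card {k \<in> {1..<j}. phi j k s \<le> u} \<le> card {k \<in> {1..<j}. phi j k t \<le> u}"
    by (intro card_mono) auto
  then show ?thesis using fj_card s by simp
qed

end

lemma isCont_SS: "isCont (SS m) t"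
  unfolding SS_def by (intro continuous_intros)

lemma isCont_phi: "j \<ge> 1 \<Longrightarrow> t \<ge> 0 \<Longrightarrow> isCont (phi j k) t"
proof -
  assume j: "j \<ge> 1" and t: "t \<ge> 0"
  have "SS j t \<noteq> 0" using SS_ge1[OF j t] by simp
  then have "isCont (\<lambda>x. SS k x / SS j x) t" by (intro isCont_divide isCont_SS)
  then show ?thesis unfolding phi_def[abs_def] .
qed

context
  fixes j :: nat and u :: real
  assumes j: "j \<ge> 1" and u0: "0 \<le> u" and u1: "u < 1"
begin

lemma fj_right: "t \<ge> 0 \<Longrightarrow> \<forall>\<^sub>F s in at_right t. fj j s u = fj j t u"
proof -
  assume t: "t \<ge> 0"
  have ev: "\<forall>\<^sub>F s in at_right t. (phi j k s \<le> u \<longleftrightarrow> phi j k t \<le> u)" if k: "k \<in> {1..<j}" for k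
  proof (cases "phi j k t \<le> u")
    case True
    have "\<forall>\<^sub>F s in at_right t. t < s" by (rule eventually_at_right_less)
    then show ?thesis
    proof eventually_elim
      case (elim s)
      then have "phi j k s \<le> phi j k t" using phi_anti[OF j _ t] k by auto
      then show ?case using True by auto
    qed
  next
    case False
    have "(phi j k \<longlongrightarrow> phi j k t) (at_right t)"
      using isCont_phi[OF j t, of k] unfolding isCont_def by (rule filterlim_at_split[THEN iffD1, THEN conjunct2])
    then have "\<forall>\<^sub>F s in at_right t. phi j k s > u" using False by (intro order_tendstoD) auto
    then show ?thesis by eventually_elim (use False in auto)
  qed
  have "\<forall>\<^sub>F s in at_right t. (\<forall>k\<in>{1..<j}. (phi j k s \<le> u \<longleftrightarrow> phi j k t \<le> u)) \<and> t < s"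
    using eventually_ball_finite[of "{1..<j}", OF _ ballI[OF ev]] eventually_at_right_less[of t]
    by (auto intro: eventually_conj)
  then show ?thesis
  proof eventually_elim
    case (elim s)
    then have "{k \<in> {1..<j}. phi j k s \<le> u} = {k \<in> {1..<j}. phi j k t \<le> u}" by auto
    then show ?case using fj_card[OF j u0 u1] t elim by simp
  qed
qed

lemma fj_left: "t > 0 \<Longrightarrow> \<forall>\<^sub>F s in at_left t. fj j s u = int (card {k \<in> {1..<j}. phi j k t < u})"
proof -
  assume t: "t > 0"
  have pos: "\<forall>\<^sub>F s in at_left t. s \<in> {0<..<t}" using eventually_at_left_real[OF t] .
  have ev: "\<forall>\<^sub>F s in at_left t. (phi j k s \<le> u \<longleftrightarrow> phi j k t < u)" if k: "k \<in> {1..<j}" for k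
  proof (cases "phi j k t < u")
    case True
    have "(phi j k \<longlongrightarrow> phi j k t) (at_left t)"
      using isCont_phi[OF j, of t k] t unfolding isCont_def
      by (intro filterlim_at_split[THEN iffD1, THEN conjunct1]) auto
    then have "\<forall>\<^sub>F s in at_left t. phi j k s < u" using True by (intro order_tendstoD) auto
    then show ?thesis by eventually_elim (use True in auto)
  next
    case False
    show ?thesis using pos
    proof eventually_elim
      case (elim s)
      then have "phi j k t < phi j k s" using k by (intro phi_strict_anti) auto
      then show ?case using False by auto
    qed
  qed
  have "\<forall>\<^sub>F s in at_left t. (\<forall>k\<in>{1..<j}. (phi j k s \<le> u \<longleftrightarrow> phi j k t < u)) \<and> s \<in> {0<..<t}"
    using eventually_ball_finite[of "{1..<j}", OF _ ballI[OF ev]] pos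
    by (auto intro: eventually_conj)
  then show ?thesis
  proof eventually_elim
    case (elim s)
    then have "{k \<in> {1..<j}. phi j k s \<le> u} = {k \<in> {1..<j}. phi j k t < u}" by auto
    then show ?case using fj_card[OF j u0 u1, of s] elim by simp
  qed
qed

lemma fj_jump:
  assumes t: "t > 0"
  shows "card {k \<in> {1..<j}. phi j k t \<le> u} \<le> card {k \<in> {1..<j}. phi j k t < u} + 1"
    and "card {k \<in> {1..<j}. phi j k t \<le> u} \<noteq> card {k \<in> {1..<j}. phi j k t < u} \<Longrightarrow>
         \<exists>k\<in>{1..<j}. phi j k t = u"
proof -
  define A where "A = {k \<in> {1..<j}. phi j k t \<le> u}"
  define B where "B = {k \<in> {1..<j}. phi j k t < u}"
  have BA: "B \<subseteq> A" and fin: "finite A" "finite B" unfolding A_def B_def by auto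
  have D: "A - B = {k \<in> {1..<j}. phi j k t = u}" unfolding A_def B_def by auto
  have "card (A - B) \<le> 1"
  proof -
    have "finite (A - B)" using fin by auto
    moreover have "\<forall>x\<in>A - B. \<forall>y\<in>A - B. x = y"
    proof (intro ballI)
      fix x y assume "x \<in> A - B" "y \<in> A - B"
      then have "phi j x t = phi j y t" unfolding D by auto
      then show "x = y" using phi_strict_k[OF j t, of x y] phi_strict_k[OF j t, of y x]
        by (cases x y rule: linorder_cases) auto
    qed
    ultimately show ?thesis using card_le_Suc0_iff_eq by (metis One_nat_def)
  qed
  moreover have "card (A - B) = card A - card B" using card_Diff_subset[OF fin(2) BA] .
  moreover have "card B \<le> card A" using card_mono[OF fin(1) BA] .
  ultimately show "card A \<le> card B + 1" by linarith
  show "\<exists>k\<in>{1..<j}. phi j k t = u" if "card A \<noteq> card B"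
  proof -
    have "A - B \<noteq> {}" using that BA by (metis Diff_eq_empty_iff subset_antisym)
    then show ?thesis unfolding D by auto
  qed
qed

end



lemma fj_measurable: "(\<lambda>u. fj j t u) \<in> measurable borel (count_space UNIV)"
proof (cases "t = 0")
  case True then show ?thesis by (simp add: fj_def)
next
  case False
  show ?thesis
  proof (cases "t = 1")
    case True
    then have "(\<lambda>u. fj j t u) = (\<lambda>u. \<lfloor>real j * u\<rfloor>)" by (simp add: fj_def fun_eq_iff)
    then show ?thesis by simp
  next
    case False
    then have "(\<lambda>u. fj j t u) = (\<lambda>u. \<lfloor>ln (1 - u * (1 - t ^ j)) / ln t\<rfloor>)"
      using \<open>t \<noteq> 0\<close> by (simp add: fj_def fun_eq_iff)
    then show ?thesis by simp
  qed
qed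

lemma measurable_fun_of_finite:
  fixes V :: "'i \<Rightarrow> 'w \<Rightarrow> int" and g :: "('i \<Rightarrow> int) \<Rightarrow> 'b"
  assumes I: "finite I" and V: "\<And>i. i \<in> I \<Longrightarrow> V i \<in> measurable M (count_space UNIV)"
    and g: "\<And>f f'. (\<forall>i\<in>I. f i = f' i) \<Longrightarrow> g f = g f'"
  shows "(\<lambda>\<omega>. g (\<lambda>i. V i \<omega>)) \<in> measurable M (count_space UNIV)"
proof -
  have ev: "{\<omega> \<in> space M. \<forall>i\<in>I. V i \<omega> = c i} \<in> sets M" for c
  proof -
    show ?thesis
    proof (cases "I = {}")
      case True then show ?thesis by simp
    next
      case False
      have "{\<omega> \<in> space M. \<forall>i\<in>I. V i \<omega> = c i} = (\<Inter>i\<in>I. V i -` {c i} \<inter> space M)"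
        using False by auto
      also have "\<dots> \<in> sets M"
        using I V False by (intro sets.finite_INT) (auto intro: measurable_sets)
      finally show ?thesis .
    qed
  qed
  show ?thesis
    unfolding measurable_def
  proof (intro CollectI conjI ballI)
    show "(\<lambda>\<omega>. g (\<lambda>i. V i \<omega>)) \<in> space M \<rightarrow> space (count_space UNIV)" by simp
    fix B :: "'b set" assume "B \<in> sets (count_space UNIV)"
    have "(\<lambda>\<omega>. g (\<lambda>i. V i \<omega>)) -` B \<inter> space M =
      (\<Union>c\<in>{c \<in> PiE I (\<lambda>_. UNIV). g c \<in> B}. {\<omega> \<in> space M. \<forall>i\<in>I. V i \<omega> = c i})"
    proof (intro set_eqI iffI)
      fix \<omega> assume \<omega>: "\<omega> \<in> (\<lambda>\<omega>. g (\<lambda>i. V i \<omega>)) -` B \<inter> space M"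
      have "g (restrict (\<lambda>i. V i \<omega>) I) = g (\<lambda>i. V i \<omega>)" by (intro g) auto
      then show "\<omega> \<in> (\<Union>c\<in>{c \<in> PiE I (\<lambda>_. UNIV). g c \<in> B}. {\<omega> \<in> space M. \<forall>i\<in>I. V i \<omega> = c i})"
        using \<omega> by (intro UN_I[of "restrict (\<lambda>i. V i \<omega>) I"]) auto
    next
      fix \<omega> assume "\<omega> \<in> (\<Union>c\<in>{c \<in> PiE I (\<lambda>_. UNIV). g c \<in> B}. {\<omega> \<in> space M. \<forall>i\<in>I. V i \<omega> = c i})"
      then obtain c where c: "g c \<in> B" "\<omega> \<in> space M" "\<forall>i\<in>I. V i \<omega> = c i" by auto
      have "g (\<lambda>i. V i \<omega>) = g c" using c(3) by (intro g) auto
      then show "\<omega> \<in> (\<lambda>\<omega>. g (\<lambda>i. V i \<omega>)) -` B \<inter> space M" using c by auto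
    qed
    also have "\<dots> \<in> sets M"
      using ev I by (intro sets.countable_UN'' countable_subset[OF _ countable_PiE[of I "\<lambda>_. UNIV"]]) auto
    finally show "(\<lambda>\<omega>. g (\<lambda>i. V i \<omega>)) -` B \<inter> space M \<in> sets M" .
  qed
qed

lemma (in prob_space) prob_eq_mod_null:
  assumes "P \<in> events" "Q \<in> events" "N \<in> null_sets M" "P - N = Q - N"
  shows "prob P = prob Q"
  using measure_Diff_null_set[OF assms(1,3)] measure_Diff_null_set[OF assms(2,3)] assms(4) by simp

lemma (in prob_space) indep_vars_AE_cong:
  assumes ind: "indep_vars M' X I" and rv: "\<And>i. i \<in> I \<Longrightarrow> random_variable (M' i) (Y i)"
    and N: "N \<in> null_sets M" and eq: "\<And>i \<omega>. i \<in> I \<Longrightarrow> \<omega> \<in> space M - N \<Longrightarrow> X i \<omega> = Y i \<omega>"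
  shows "indep_vars M' Y I"
  unfolding indep_vars_def2
proof (intro conjI ballI)
  show "random_variable (M' i) (Y i)" if "i \<in> I" for i using rv that .
  have indX: "indep_sets (\<lambda>i. {X i -` A \<inter> space M |A. A \<in> sets (M' i)}) I"
    using ind unfolding indep_vars_def2 by simp
  have rvX: "\<And>i. i \<in> I \<Longrightarrow> random_variable (M' i) (X i)" using ind unfolding indep_vars_def2 by simp
  show "indep_sets (\<lambda>i. {Y i -` A \<inter> space M |A. A \<in> sets (M' i)}) I"
    unfolding indep_sets_def
  proof (intro conjI allI impI ballI)
    fix i assume "i \<in> I"
    then show "{Y i -` A \<inter> space M |A. A \<in> sets (M' i)} \<subseteq> events"
      using rv by (auto intro: measurable_sets)
  next
    fix J A assume J: "J \<subseteq> I" "J \<noteq> {}" "finite J"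
      and A: "A \<in> (\<Pi> j\<in>J. {Y j -` A \<inter> space M |A. A \<in> sets (M' j)})"
    then have "\<forall>j\<in>J. \<exists>C. C \<in> sets (M' j) \<and> A j = Y j -` C \<inter> space M" by auto
    then obtain C where C: "\<And>j. j \<in> J \<Longrightarrow> C j \<in> sets (M' j) \<and> A j = Y j -` C j \<inter> space M"
      by metis
    define B where "B j = X j -` C j \<inter> space M" for j
    have Bin: "B \<in> (\<Pi> j\<in>J. {X j -` A \<inter> space M |A. A \<in> sets (M' j)})"
      unfolding B_def using C by auto
    have Bprod: "prob (\<Inter>j\<in>J. B j) = (\<Prod>j\<in>J. prob (B j))"
      using indX J Bin unfolding indep_sets_def by blast
    have Bev: "B j \<in> events" if "j \<in> J" for j
      unfolding B_def using measurable_sets[OF rvX[of j] C[of j, THEN conjunct1]] J that by auto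
    have Aev: "A j \<in> events" if "j \<in> J" for j
      using measurable_sets[OF rv[of j] C[of j, THEN conjunct1]] C[of j] J that by auto
    have dif: "\<And>j. j \<in> J \<Longrightarrow> A j - N = B j - N"
      using C eq J unfolding B_def by auto
    have "prob (A j) = prob (B j)" if "j \<in> J" for j
      using prob_eq_mod_null[OF Aev[OF that] Bev[OF that] N dif[OF that]] .
    moreover have "prob (\<Inter>j\<in>J. A j) = prob (\<Inter>j\<in>J. B j)"
    proof (rule prob_eq_mod_null[OF _ _ N])
      show "(\<Inter>j\<in>J. A j) \<in> events" using Aev J by (intro sets.finite_INT) auto
      show "(\<Inter>j\<in>J. B j) \<in> events" using Bev J by (intro sets.finite_INT) auto
      show "(\<Inter>j\<in>J. A j) - N = (\<Inter>j\<in>J. B j) - N" using dif J by blast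
    qed
    ultimately show "prob (\<Inter>j\<in>J. A j) = (\<Prod>j\<in>J. prob (A j))" using Bprod by simp
  qed
qed



abbreviation "Unif \<equiv> uniform_measure lborel {0..(1::real)}"

lemma Unif_prob: "prob_space Unif"
  by (intro prob_space_uniform_measure) auto

lemma Unif_emeasure: "B \<in> sets borel \<Longrightarrow> emeasure Unif B = emeasure lborel ({0..1} \<inter> B)"
  by (subst emeasure_uniform_measure) (auto simp: divide_ennreal_def)

lemma Unif_single: "emeasure Unif {y} = 0"
proof -
  have "emeasure Unif {y} = emeasure lborel ({0..1} \<inter> {y})" by (rule Unif_emeasure) auto
  also have "\<dots> \<le> emeasure lborel {y}" by (intro emeasure_mono) auto
  finally show ?thesis by simp
qed

locale UM = prob_space M for M :: "'w measure" +
  fixes n :: nat and U :: "nat \<Rightarrow> 'w \<Rightarrow> real"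
  assumes indep: "indep_vars (\<lambda>_. borel) U {1..n}"
    and unif: "\<And>j. j \<in> {1..n} \<Longrightarrow> distr M lborel (U j) = uniform_measure lborel {0..1}"
begin

lemma rvU: "j \<in> {1..n} \<Longrightarrow> U j \<in> borel_measurable M"
  using indep unfolding indep_vars_def by auto

lemma distrU: "j \<in> {1..n} \<Longrightarrow> distr M borel (U j) = Unif"
  using unif[of j] by (metis distr_cong sets_lborel)

lemma emeasure_U: "j \<in> {1..n} \<Longrightarrow> B \<in> sets borel \<Longrightarrow>
    emeasure M (U j -` B \<inter> space M) = emeasure lborel ({0..1} \<inter> B)"
  using emeasure_distr[OF rvU, of j B] distrU[of j] Unif_emeasure[of B] by simp

lemma prob_U: "j \<in> {1..n} \<Longrightarrow> B \<in> sets borel \<Longrightarrow>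
    prob (U j -` B \<inter> space M) = measure lborel ({0..1} \<inter> B)"
  using emeasure_U[of j B] unfolding measure_def by simp

lemma AE_U_range: "j \<in> {1..n} \<Longrightarrow> AE \<omega> in M. 0 \<le> U j \<omega> \<and> U j \<omega> < 1"
proof -
  assume j: "j \<in> {1..n}"
  have Bb: "{..<0} \<union> {1..} \<in> sets (borel :: real measure)" by auto
  have "emeasure M (U j -` ({..<0} \<union> {1..}) \<inter> space M) = emeasure lborel ({0..1::real} \<inter> ({..<0} \<union> {1..}))"
    using emeasure_U[OF j Bb] by simp
  also have "{0..1} \<inter> ({..<0} \<union> {1..}) = {1::real}" by auto
  finally have z: "emeasure M (U j -` ({..<0} \<union> {1..}) \<inter> space M) = 0" by simp
  show ?thesis
    by (rule AE_I[OF _ z]) (use measurable_sets[OF rvU[OF j] Bb] in auto)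
qed

lemma AE_good: "AE \<omega> in M. \<forall>j\<in>{1..n}. 0 \<le> U j \<omega> \<and> U j \<omega> < 1"
  by (intro AE_finite_allI AE_U_range) auto

lemma prob_fj:
  assumes j: "j \<in> {1..n}" and t: "t \<ge> 0" and c: "c < j"
  shows "prob {\<omega> \<in> space M. fj j t (U j \<omega>) = int c} = t ^ c / SS j t"
proof -
  have j1: "j \<ge> 1" using j by simp
  define E where "E = {u. fj j t u = int c}"
  have Eb: "E \<in> sets borel"
  proof -
    have "E = (\<lambda>u. fj j t u) -` {int c} \<inter> space borel" unfolding E_def by auto
    also have "\<dots> \<in> sets borel" by (rule measurable_sets[OF fj_measurable]) auto
    finally show ?thesis .
  qed
  have "{\<omega> \<in> space M. fj j t (U j \<omega>) = int c} = U j -` E \<inter> space M" unfolding E_def by auto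
  then have "prob {\<omega> \<in> space M. fj j t (U j \<omega>) = int c} = measure lborel ({0..1} \<inter> E)"
    using prob_U[OF j Eb] by simp
  also have "{0..1} \<inter> E = {phi j c t..<phi j (Suc c) t} \<union> ({1} \<inter> E)"
  proof (intro set_eqI iffI)
    fix u assume u: "u \<in> {0..1} \<inter> E"
    show "u \<in> {phi j c t..<phi j (Suc c) t} \<union> ({1} \<inter> E)"
    proof (cases "u = 1")
      case True then show ?thesis using u by auto
    next
      case False
      then have u0: "0 \<le> u" "u < 1" using u by auto
      have "int c \<le> fj j t u" "\<not> int (Suc c) \<le> fj j t u" using u unfolding E_def by auto
      then show ?thesis using fj_key[OF j1 u0 t, of c] fj_key[OF j1 u0 t, of "Suc c"] c by auto
    qed
  next
    fix u assume u: "u \<in> {phi j c t..<phi j (Suc c) t} \<union> ({1} \<inter> E)"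
    show "u \<in> {0..1} \<inter> E"
    proof (cases "u \<in> {1} \<inter> E")
      case True then show ?thesis by auto
    next
      case False
      then have ui: "phi j c t \<le> u" "u < phi j (Suc c) t" using u by auto
      have u0: "0 \<le> u" using ui phi_nonneg[OF t, of j c] by linarith
      have u1: "u < 1" using ui phi_le1[OF j1 t, of "Suc c"] c by linarith
      have "int c \<le> fj j t u" "\<not> int (Suc c) \<le> fj j t u"
        using fj_key[OF j1 u0 u1 t, of c] fj_key[OF j1 u0 u1 t, of "Suc c"] c ui by auto
      then show ?thesis using u0 u1 unfolding E_def by auto
    qed
  qed
  also have "measure lborel ({phi j c t..<phi j (Suc c) t} \<union> ({1} \<inter> E)) =
      measure lborel {phi j c t..<phi j (Suc c) t}"
  proof (rule measure_Un_null_set)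
    show "{phi j c t..<phi j (Suc c) t} \<in> sets lborel" by simp
    show "{1} \<inter> E \<in> null_sets lborel"
      by (rule null_sets_subset[of "{1}"]) (use Eb in \<open>auto simp: null_sets_def\<close>)
  qed
  also have "\<dots> = phi j (Suc c) t - phi j c t"
    using phi_mono_k[OF j1 t, of c "Suc c"] by simp
  also have "\<dots> = t ^ c / SS j t" by (rule phi_Suc_diff[OF j1 t])
  finally show ?thesis .
qed

end



context UM
begin

lemma indep_pair:
  assumes j: "j \<in> {1..n}" and j': "j' \<in> {1..n}" and neq: "j \<noteq> j'"
  shows "indep_var borel (U j) borel (U j')"
proof -
  have "indep_var (PiM {j} (\<lambda>_. borel)) (\<lambda>\<omega>. restrict (\<lambda>i. U i \<omega>) {j})
                  (PiM {j'} (\<lambda>_. borel)) (\<lambda>\<omega>. restrict (\<lambda>i. U i \<omega>) {j'})"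
    by (rule indep_var_restrict[OF indep]) (use j j' neq in auto)
  then have "indep_var borel ((\<lambda>f. f j) \<circ> (\<lambda>\<omega>. restrict (\<lambda>i. U i \<omega>) {j}))
                       borel ((\<lambda>f. f j') \<circ> (\<lambda>\<omega>. restrict (\<lambda>i. U i \<omega>) {j'}))"
    by (rule indep_var_compose) (auto intro: measurable_component_singleton)
  moreover have "((\<lambda>f. f j) \<circ> (\<lambda>\<omega>. restrict (\<lambda>i. U i \<omega>) {j})) = U j"
    "((\<lambda>f. f j') \<circ> (\<lambda>\<omega>. restrict (\<lambda>i. U i \<omega>) {j'})) = U j'"
    by (auto simp: fun_eq_iff)
  ultimately show ?thesis by simp
qed

lemma nosim:
  assumes j: "j \<in> {1..n}" and j': "j' \<in> {1..n}" and neq: "j \<noteq> j'"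
    and k: "k \<in> {1..<j}" and k': "k' \<in> {1..<j'}"
  shows "AE \<omega> in M. \<not> (\<exists>t>0. phi j k t = U j \<omega> \<and> phi j' k' t = U j' \<omega>)"
proof -
  have j1: "j \<ge> 1" and j1': "j' \<ge> 1" using j j' by auto
  define \<Gamma> where "\<Gamma> t = (phi j k t, phi j' k' t)" for t
  define A where "A = {p. \<exists>t>0. \<Gamma> t = p}"
  have A_eq: "A = (\<Union>m::nat. \<Gamma> ` {1 / real (Suc m)..real (Suc m)})"
  proof (intro set_eqI iffI)
    fix p assume "p \<in> A"
    then obtain t where t: "t > 0" "\<Gamma> t = p" unfolding A_def by auto
    define m where "m = nat \<lceil>max t (1 / t)\<rceil>"
    have m1: "real (Suc m) \<ge> t" "real (Suc m) \<ge> 1 / t" unfolding m_def by linarith+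
    have "1 / real (Suc m) \<le> t"
      using m1(2) t(1) by (simp add: divide_simps mult.commute)
    then have "t \<in> {1 / real (Suc m)..real (Suc m)}" using m1 by auto
    then have "p \<in> \<Gamma> ` {1 / real (Suc m)..real (Suc m)}" using t by auto
    then show "p \<in> (\<Union>m::nat. \<Gamma> ` {1 / real (Suc m)..real (Suc m)})" by blast
  next
    fix p assume "p \<in> (\<Union>m::nat. \<Gamma> ` {1 / real (Suc m)..real (Suc m)})"
    then obtain m t where "t \<in> {1 / real (Suc m)..real (Suc m)}" "p = \<Gamma> t" by auto
    moreover then have "t > 0" by (smt (verit, best) atLeastAtMost_iff of_nat_0_less_iff zero_less_Suc divide_pos_pos)
    ultimately show "p \<in> A" unfolding A_def by auto
  qed
  have contG: "continuous_on {1 / real (Suc m)..real (Suc m)} \<Gamma>" for m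
  proof (rule continuous_at_imp_continuous_on, intro ballI)
    fix x assume x: "x \<in> {1 / real (Suc m)..real (Suc m)}"
    then have "x \<ge> 0" by (smt (verit) atLeastAtMost_iff divide_nonneg_nonneg of_nat_0_le_iff)
    then show "isCont \<Gamma> x" unfolding \<Gamma>_def
      using isCont_phi[OF j1 \<open>x \<ge> 0\<close>, of k] isCont_phi[OF j1' \<open>x \<ge> 0\<close>, of k']
      by (intro continuous_Pair) auto
  qed
  have A_sets: "A \<in> sets (borel \<Otimes>\<^sub>M borel)"
  proof -
    have "\<Gamma> ` {1 / real (Suc m)..real (Suc m)} \<in> sets borel" for m
      by (intro borel_closed compact_imp_closed compact_continuous_image contG compact_Icc)
    then show ?thesis unfolding borel_prod A_eq by auto
  qed
  have ind: "indep_var borel (U j) borel (U j')" by (rule indep_pair[OF j j' neq])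
  have rvs: "random_variable borel (U j)" "random_variable borel (U j')" using rvU j j' by auto
  have D: "distr M (borel \<Otimes>\<^sub>M borel) (\<lambda>x. (U j x, U j' x)) = Unif \<Otimes>\<^sub>M Unif"
    using ind unfolding indep_var_distribution_eq using distrU[OF j] distrU[OF j'] by simp
  interpret U2: prob_space Unif by (rule Unif_prob)
  have sec: "emeasure Unif (Pair x -` A) = 0" for x
  proof (cases "Pair x -` A = {}")
    case True then show ?thesis by simp
  next
    case False
    then obtain y0 where y0: "(x, y0) \<in> A" by auto
    then obtain t0 where t0: "t0 > 0" "\<Gamma> t0 = (x, y0)" unfolding A_def by auto
    have "Pair x -` A \<subseteq> {y0}"
    proof
      fix y assume "y \<in> Pair x -` A"
      then obtain t where t: "t > 0" "\<Gamma> t = (x, y)" unfolding A_def by auto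
      have "t = t0"
      proof (rule ccontr)
        assume "t \<noteq> t0"
        then have "phi j k t \<noteq> phi j k t0"
          using phi_strict_anti[of k j t t0] phi_strict_anti[of k j t0 t] k t t0
          by (cases t t0 rule: linorder_cases) auto
        then show False using t t0 unfolding \<Gamma>_def by auto
      qed
      then show "y \<in> {y0}" using t t0 by simp
    qed
    then have "emeasure Unif (Pair x -` A) \<le> emeasure Unif {y0}" by (intro emeasure_mono) auto
    then show ?thesis using Unif_single[of y0] by simp
  qed
  have "emeasure M ((\<lambda>x. (U j x, U j' x)) -` A \<inter> space M) = emeasure (distr M (borel \<Otimes>\<^sub>M borel) (\<lambda>x. (U j x, U j' x))) A"
    using A_sets rvs by (intro emeasure_distr[symmetric]) (auto intro: measurable_Pair)
  also have "\<dots> = emeasure (Unif \<Otimes>\<^sub>M Unif) A" using D by simp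
  also have "\<dots> = (\<integral>\<^sup>+x. emeasure Unif (Pair x -` A) \<partial>Unif)"
  proof (rule U2.emeasure_pair_measure_alt)
    have "sets (Unif \<Otimes>\<^sub>M Unif) = sets (borel \<Otimes>\<^sub>M borel)"
      by (intro sets_pair_measure_cong) auto
    then show "A \<in> sets (Unif \<Otimes>\<^sub>M Unif)" using A_sets by simp
  qed
  also have "\<dots> = 0" using sec by simp
  finally have z: "emeasure M ((\<lambda>x. (U j x, U j' x)) -` A \<inter> space M) = 0" .
  show ?thesis
  proof (rule AE_I[OF _ z])
    show "{\<omega> \<in> space M. \<not> \<not> (\<exists>t>0. phi j k t = U j \<omega> \<and> phi j' k' t = U j' \<omega>)}
        \<subseteq> (\<lambda>x. (U j x, U j' x)) -` A \<inter> space M"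
      unfolding A_def \<Gamma>_def by auto
    show "(\<lambda>x. (U j x, U j' x)) -` A \<inter> space M \<in> events"
      using A_sets rvs by (intro measurable_sets[OF measurable_Pair]) auto
  qed
qed

end



definition good :: "nat \<Rightarrow> (nat \<Rightarrow> 'w \<Rightarrow> real) \<Rightarrow> 'w \<Rightarrow> bool" where
  "good n U \<omega> \<longleftrightarrow> (\<forall>j\<in>{1..n}. 0 \<le> U j \<omega> \<and> U j \<omega> < 1)"

definition nosim_all :: "nat \<Rightarrow> (nat \<Rightarrow> 'w \<Rightarrow> real) \<Rightarrow> 'w \<Rightarrow> bool" where
  "nosim_all n U \<omega> \<longleftrightarrow> (\<forall>j\<in>{1..n}. \<forall>j'\<in>{1..n}. j \<noteq> j' \<longrightarrow> (\<forall>k\<in>{1..<j}. \<forall>k'\<in>{1..<j'}.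
      \<not> (\<exists>t>0. phi j k t = U j \<omega> \<and> phi j' k' t = U j' \<omega>)))"

context
  fixes n :: nat and U :: "nat \<Rightarrow> 'w \<Rightarrow> real" and \<omega> :: 'w
  assumes g: "good n U \<omega>"
begin

lemma g_j: "j \<in> {1..n} \<Longrightarrow> j \<ge> 1 \<and> 0 \<le> U j \<omega> \<and> U j \<omega> < 1"
  using g unfolding good_def by auto

lemma codes_ok: "t \<ge> 0 \<Longrightarrow> \<forall>j\<in>{1..n}. 0 \<le> fj j t (U j \<omega>) \<and> fj j t (U j \<omega>) \<le> int j - 1"
  using fj_range g_j by blast

lemma X_props: "t \<ge> 0 \<Longrightarrow> uniform_mallows n U t \<omega> permutes {1..n} \<and>
    (\<forall>j\<in>{1..n}. int (InvJ j (uniform_mallows n U t \<omega>)) = fj j t (U j \<omega>))"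
  unfolding uniform_mallows_def using Phi_props[OF codes_ok] by blast

lemma InvJ_X: "t \<ge> 0 \<Longrightarrow> j \<in> {1..n} \<Longrightarrow> InvJ j (uniform_mallows n U t \<omega>) = nat (fj j t (U j \<omega>))"
  using X_props by (metis nat_int)

lemma InvJ_X_card: "t \<ge> 0 \<Longrightarrow> j \<in> {1..n} \<Longrightarrow>
    InvJ j (uniform_mallows n U t \<omega>) = card {k \<in> {1..<j}. phi j k t \<le> U j \<omega>}"
  using InvJ_X fj_card g_j by (metis nat_int)

lemma X_mono: "j \<in> {1..n} \<Longrightarrow> 0 \<le> s \<Longrightarrow> s \<le> t \<Longrightarrow>
    InvJ j (uniform_mallows n U s \<omega>) \<le> InvJ j (uniform_mallows n U t \<omega>)"
proof -
  assume j: "j \<in> {1..n}" and s: "0 \<le> s" "s \<le> t"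
  have "fj j s (U j \<omega>) \<le> fj j t (U j \<omega>)" using fj_mono g_j[OF j] s by blast
  then show ?thesis using InvJ_X[OF s(1) j] InvJ_X[OF order_trans[OF s] j] by simp
qed

lemma X_right: "t \<ge> 0 \<Longrightarrow> \<forall>\<^sub>F s in at_right t. uniform_mallows n U s \<omega> = uniform_mallows n U t \<omega>"
proof -
  assume t: "t \<ge> 0"
  have "\<forall>\<^sub>F s in at_right t. \<forall>j\<in>{1..n}. fj j s (U j \<omega>) = fj j t (U j \<omega>)"
    using g_j t by (intro eventually_ball_finite ballI fj_right) auto
  then show ?thesis
    by eventually_elim (simp add: uniform_mallows_def Phi_cong)
qed

definition leftcode :: "real \<Rightarrow> nat \<Rightarrow> int" where
  "leftcode t j = int (card {k \<in> {1..<j}. phi j k t < U j \<omega>})"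

lemma X_left: "t > 0 \<Longrightarrow> \<forall>\<^sub>F s in at_left t. uniform_mallows n U s \<omega> = Phi n (leftcode t)"
proof -
  assume t: "t > 0"
  have "\<forall>\<^sub>F s in at_left t. \<forall>j\<in>{1..n}. fj j s (U j \<omega>) = leftcode t j"
    unfolding leftcode_def using g_j t by (intro eventually_ball_finite ballI fj_left) auto
  then show ?thesis
    by eventually_elim (simp add: uniform_mallows_def Phi_cong)
qed

lemma leftcode_ok: "\<forall>j\<in>{1..n}. 0 \<le> leftcode t j \<and> leftcode t j \<le> int j - 1"
proof
  fix j assume j: "j \<in> {1..n}"
  have "card {k \<in> {1..<j}. phi j k t < U j \<omega>} \<le> card {1..<j}" by (intro card_mono) auto
  then show "0 \<le> leftcode t j \<and> leftcode t j \<le> int j - 1" unfolding leftcode_def using j by auto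
qed

lemma left_lim_X: "t > 0 \<Longrightarrow> left_lim (\<lambda>s. uniform_mallows n U s \<omega>) t = Phi n (leftcode t)"
proof -
  assume t: "t > 0"
  show ?thesis unfolding left_lim_def using t
  proof (simp, intro the_equality)
    show "\<forall>\<^sub>F s in at_left t. uniform_mallows n U s \<omega> = Phi n (leftcode t)" by (rule X_left[OF t])
    fix a assume "\<forall>\<^sub>F s in at_left t. uniform_mallows n U s \<omega> = a"
    then have "\<forall>\<^sub>F s in at_left t. a = Phi n (leftcode t)"
      using X_left[OF t] by eventually_elim auto
    then show "a = Phi n (leftcode t)" by simp
  qed
qed

lemma cadlag_X: "cadlag_discrete (\<lambda>t. uniform_mallows n U t \<omega>)"
  unfolding cadlag_discrete_def using X_right X_left by blast

lemma Inv_jump: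
  assumes ns: "nosim_all n U \<omega>" and t: "t \<ge> 0"
  shows "Inv n (uniform_mallows n U t \<omega>) \<le> Inv n (left_lim (\<lambda>s. uniform_mallows n U s \<omega>) t) + 1"
proof (cases "t = 0")
  case True then show ?thesis by (simp add: left_lim_def)
next
  case False
  then have tp: "t > 0" using t by simp
  define A where "A j = card {k \<in> {1..<j}. phi j k t \<le> U j \<omega>}" for j
  define B where "B j = card {k \<in> {1..<j}. phi j k t < U j \<omega>}" for j
  have invA: "Inv n (uniform_mallows n U t \<omega>) = (\<Sum>j\<in>{1..n}. A j)"
    unfolding Inv_def A_def using InvJ_X_card[OF t] by simp
  have invB: "Inv n (left_lim (\<lambda>s. uniform_mallows n U s \<omega>) t) = (\<Sum>j\<in>{1..n}. B j)"
  proof -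
    have "InvJ j (Phi n (leftcode t)) = B j" if "j \<in> {1..n}" for j
    proof -
      have "int (InvJ j (Phi n (leftcode t))) = leftcode t j" using Phi_props[OF leftcode_ok] that by blast
      then show ?thesis unfolding leftcode_def B_def by simp
    qed
    then show ?thesis unfolding Inv_def left_lim_X[OF tp] by simp
  qed
  have AB: "A j \<le> B j + 1" "B j \<le> A j" if "j \<in> {1..n}" for j
  proof -
    show "A j \<le> B j + 1" unfolding A_def B_def using fj_jump(1)[OF _ _ _ tp] g_j[OF that] by blast
    show "B j \<le> A j" unfolding A_def B_def by (intro card_mono) auto
  qed
  have uniq: "j = j'" if jj: "j \<in> {1..n}" "j' \<in> {1..n}" "A j \<noteq> B j" "A j' \<noteq> B j'" for j j'
  proof (rule ccontr)
    assume neq: "j \<noteq> j'"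
    obtain k where k: "k \<in> {1..<j}" "phi j k t = U j \<omega>"
      using fj_jump(2)[OF _ _ _ tp] g_j[OF jj(1)] jj(3) unfolding A_def B_def by blast
    obtain k' where k': "k' \<in> {1..<j'}" "phi j' k' t = U j' \<omega>"
      using fj_jump(2)[OF _ _ _ tp] g_j[OF jj(2)] jj(4) unfolding A_def B_def by blast
    show False using ns jj(1,2) neq k k' tp unfolding nosim_all_def by blast
  qed
  show ?thesis
  proof (cases "\<exists>j\<in>{1..n}. A j \<noteq> B j")
    case False
    then show ?thesis using invA invB by simp
  next
    case True
    then obtain j0 where j0: "j0 \<in> {1..n}" "A j0 \<noteq> B j0" by blast
    have rest: "A j = B j" if "j \<in> {1..n} - {j0}" for j using uniq[of j j0] that j0 by auto
    have "(\<Sum>j\<in>{1..n}. A j) = A j0 + (\<Sum>j\<in>{1..n} - {j0}. A j)"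
      using j0 by (intro sum.remove) auto
    also have "\<dots> = A j0 + (\<Sum>j\<in>{1..n} - {j0}. B j)" using rest by simp
    also have "\<dots> \<le> B j0 + 1 + (\<Sum>j\<in>{1..n} - {j0}. B j)" using AB(1)[OF j0(1)] by simp
    also have "B j0 + 1 + (\<Sum>j\<in>{1..n} - {j0}. B j) = (\<Sum>j\<in>{1..n}. B j) + 1"
      using sum.remove[of "{1..n}" j0 B] j0 by simp
    finally show ?thesis using invA invB by simp
  qed
qed

end



context UM
begin

lemma AE_good': "AE \<omega> in M. good n U \<omega>"
  using AE_good unfolding good_def .

lemma AE_nosim: "AE \<omega> in M. nosim_all n U \<omega>"
  unfolding nosim_all_def
  by (intro AE_finite_allI AE_impI nosim) auto

lemma V_meas: "i \<in> {1..n} \<Longrightarrow> (\<lambda>\<omega>. fj i t (U i \<omega>)) \<in> measurable M (count_space UNIV)"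
  by (rule measurable_compose[OF rvU fj_measurable])

lemma X_meas: "uniform_mallows n U t \<in> measurable M (count_space UNIV)"
proof -
  have "(\<lambda>\<omega>. Phi n (\<lambda>i. fj i t (U i \<omega>))) \<in> measurable M (count_space UNIV)"
    by (rule measurable_fun_of_finite[where I="{1..n}" and V="\<lambda>i \<omega>. fj i t (U i \<omega>)"])
       (auto intro: Phi_cong V_meas)
  then show ?thesis unfolding uniform_mallows_def[abs_def] .
qed

lemma InvJ_X_meas: "(\<lambda>\<omega>. InvJ j (uniform_mallows n U t \<omega>)) \<in> measurable M (count_space UNIV)"
proof -
  have "(\<lambda>\<omega>. InvJ j (Phi n (\<lambda>i. fj i t (U i \<omega>)))) \<in> measurable M (count_space UNIV)"
  proof (rule measurable_fun_of_finite[where I="{1..n}" and V="\<lambda>i \<omega>. fj i t (U i \<omega>)"])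
    show "\<And>f f'. \<forall>i\<in>{1..n}. f i = f' i \<Longrightarrow> InvJ j (Phi n f) = InvJ j (Phi n f')"
      using Phi_cong by metis
  qed (auto intro: V_meas)
  then show ?thesis unfolding uniform_mallows_def .
qed

lemma event_meas: "{\<omega> \<in> space M. uniform_mallows n U t \<omega> = \<sigma>} \<in> events"
proof -
  have "{\<omega> \<in> space M. uniform_mallows n U t \<omega> = \<sigma>} = uniform_mallows n U t -` {\<sigma>} \<inter> space M" by auto
  also have "\<dots> \<in> events" by (rule measurable_sets[OF X_meas]) auto
  finally show ?thesis .
qed

lemma event_prob:
  assumes t: "t \<ge> 0" and ps: "\<sigma> permutes {1..n}"
  shows "prob {\<omega> \<in> space M. uniform_mallows n U t \<omega> = \<sigma>} = mallows n t \<sigma>"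
proof -
  define c where "c j = InvJ j \<sigma>" for j
  have cj: "c j < j" if "j \<in> {1..n}" for j using InvJ_le[of j \<sigma>] that unfolding c_def by auto
  define E2 where "E2 = {\<omega> \<in> space M. \<forall>j\<in>{1..n}. fj j t (U j \<omega>) = int (c j)}"
  have E2_eq: "E2 = space M \<inter> (\<Inter>j\<in>{1..n}. (\<lambda>\<omega>. fj j t (U j \<omega>)) -` {int (c j)} \<inter> space M)"
    unfolding E2_def by auto
  have E2_meas: "E2 \<in> events"
  proof -
    have "{\<omega> \<in> space M. \<forall>j\<in>{1..n}. fj j t (U j \<omega>) = int (c j)} =
        (\<lambda>\<omega>. (\<forall>j\<in>{1..n}. fj j t (U j \<omega>) = int (c j))) -` {True} \<inter> space M" by auto
    also have "\<dots> \<in> events"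
    proof (rule measurable_sets)
      show "(\<lambda>\<omega>. (\<forall>j\<in>{1..n}. fj j t (U j \<omega>) = int (c j))) \<in> measurable M (count_space UNIV)"
        by (rule measurable_fun_of_finite[where I="{1..n}" and V="\<lambda>i \<omega>. fj i t (U i \<omega>)"
              and g="\<lambda>f. \<forall>j\<in>{1..n}. f j = int (c j)"]) (auto intro: V_meas)
    qed auto
    finally show ?thesis unfolding E2_def .
  qed
  have "prob {\<omega> \<in> space M. uniform_mallows n U t \<omega> = \<sigma>} = prob E2"
  proof (rule measure_eq_AE[OF _ event_meas E2_meas])
    show "AE \<omega> in M. (\<omega> \<in> {\<omega> \<in> space M. uniform_mallows n U t \<omega> = \<sigma>}) = (\<omega> \<in> E2)"
      using AE_good'
    proof (rule AE_mp)
      show "AE \<omega> in M. good n U \<omega> \<longrightarrow> (\<omega> \<in> {\<omega> \<in> space M. uniform_mallows n U t \<omega> = \<sigma>}) = (\<omega> \<in> E2)"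
      proof (rule AE_I2, rule impI)
        fix \<omega> assume om: "\<omega> \<in> space M" and g: "good n U \<omega>"
        have "uniform_mallows n U t \<omega> = \<sigma> \<longleftrightarrow> (\<forall>j\<in>{1..n}. fj j t (U j \<omega>) = int (InvJ j \<sigma>))"
          unfolding uniform_mallows_def by (rule Phi_eq_iff[OF codes_ok[OF g t] ps])
        then show "(\<omega> \<in> {\<omega> \<in> space M. uniform_mallows n U t \<omega> = \<sigma>}) = (\<omega> \<in> E2)"
          using om unfolding E2_def c_def by auto
      qed
    qed
  qed
  also have "prob E2 = (\<Prod>j\<in>{1..n}. t ^ c j / SS j t)"
  proof (cases "n = 0")
    case True
    then have "E2 = space M" unfolding E2_def by auto
    then show ?thesis using True by (simp add: prob_space)
  next
    case False
    have indV: "indep_vars (\<lambda>_. count_space UNIV) (\<lambda>j \<omega>. fj j t (U j \<omega>)) {1..n}"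
      by (rule indep_vars_compose2[OF indep fj_measurable])
    have "prob E2 = prob (\<Inter>j\<in>{1..n}. (\<lambda>\<omega>. fj j t (U j \<omega>)) -` {int (c j)} \<inter> space M)"
      unfolding E2_eq using False by (intro arg_cong[where f=prob]) auto
    also have "\<dots> = (\<Prod>j\<in>{1..n}. prob ((\<lambda>\<omega>. fj j t (U j \<omega>)) -` {int (c j)} \<inter> space M))"
      using False by (intro indep_varsD[OF indV]) auto
    also have "\<dots> = (\<Prod>j\<in>{1..n}. t ^ c j / SS j t)"
    proof (rule prod.cong[OF refl])
      fix j assume j: "j \<in> {1..n}"
      have "(\<lambda>\<omega>. fj j t (U j \<omega>)) -` {int (c j)} \<inter> space M = {\<omega> \<in> space M. fj j t (U j \<omega>) = int (c j)}"
        by auto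
      then show "prob ((\<lambda>\<omega>. fj j t (U j \<omega>)) -` {int (c j)} \<inter> space M) = t ^ c j / SS j t"
        using prob_fj[OF j t cj[OF j]] by simp
    qed
    finally show ?thesis .
  qed
  also have "\<dots> = mallows n t \<sigma>"
    unfolding mallows_def Inv_def SS_def c_def by (simp add: power_sum prod_dividef)
  finally show ?thesis .
qed

lemma indep_paths:
  "indep_vars (\<lambda>_. PiM {0..} (\<lambda>_. count_space UNIV))
      (\<lambda>j \<omega>. restrict (\<lambda>t. InvJ j (uniform_mallows n U t \<omega>)) {0..}) {1..n}"
proof -
  define H where "H j u = restrict (\<lambda>t. nat (fj j t u)) {0::real..}" for j u
  have Hm: "H j \<in> measurable borel (PiM {0..} (\<lambda>_. count_space UNIV))" for j
    unfolding H_def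
    by (intro measurable_restrict measurable_compose[OF fj_measurable measurable_count_space])
  have indH: "indep_vars (\<lambda>_. PiM {0..} (\<lambda>_. count_space UNIV)) (\<lambda>j \<omega>. H j (U j \<omega>)) {1..n}"
    by (rule indep_vars_compose2[OF indep Hm])
  have rvY: "random_variable (PiM {0..} (\<lambda>_. count_space UNIV))
      (\<lambda>\<omega>. restrict (\<lambda>t. InvJ j (uniform_mallows n U t \<omega>)) {0..})" for j
    by (intro measurable_restrict InvJ_X_meas)
  obtain N where N: "\<And>\<omega>. \<omega> \<in> space M - N \<Longrightarrow> good n U \<omega>" "N \<in> null_sets M"
    using AE_E3[OF AE_good'] by blast
  show ?thesis
  proof (rule indep_vars_AE_cong[OF indH rvY N(2)])
    fix j \<omega> assume j: "j \<in> {1..n}" and om: "\<omega> \<in> space M - N"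
    show "H j (U j \<omega>) = restrict (\<lambda>t. InvJ j (uniform_mallows n U t \<omega>)) {0..}"
      unfolding H_def using InvJ_X[OF N(1)[OF om] _ j] by (auto simp: fun_eq_iff)
  qed
qed

end

theorem mainTheorem9:
  fixes M :: "'w measure" and n :: nat and U :: "nat \<Rightarrow> 'w \<Rightarrow> real"
  assumes "prob_space M"
    and "prob_space.indep_vars M (\<lambda>_. borel) U {1..n}"
    and "\<And>j. j \<in> {1..n} \<Longrightarrow> distr M lborel (U j) = uniform_measure lborel {0..1}"
  shows "regular_mallows_process M n (uniform_mallows n U)"
proof -
  interpret UM M n U
    using assms unfolding UM_def UM_axioms_def by blast
  show ?thesis
    unfolding regular_mallows_process_def mallows_process_def
  proof (intro conjI allI impI)
    show "AE \<omega> in M. (\<forall>t\<ge>0. uniform_mallows n U t \<omega> permutes {1..n}) \<and>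
        cadlag_discrete (\<lambda>t. uniform_mallows n U t \<omega>)"
      using AE_good'
    proof (rule AE_mp, intro AE_I2 impI conjI allI)
      fix \<omega> and t :: real assume g: "good n U \<omega>" and t: "0 \<le> t"
      show "uniform_mallows n U t \<omega> permutes {1..n}" using X_props[OF g t] by (rule conjunct1)
    next
      fix \<omega> assume "good n U \<omega>"
      then show "cadlag_discrete (\<lambda>t. uniform_mallows n U t \<omega>)" by (rule cadlag_X)
    qed
  next
    fix t :: real and \<sigma> assume "0 \<le> t" "\<sigma> permutes {1..n}"
    then show "{\<omega> \<in> space M. uniform_mallows n U t \<omega> = \<sigma>} \<in> sets M"
      "measure M {\<omega> \<in> space M. uniform_mallows n U t \<omega> = \<sigma>} = mallows n t \<sigma>"
      using event_meas event_prob by auto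
  next
    show "AE \<omega> in M. (\<forall>j\<in>{1..n}. \<forall>s t. 0 \<le> s \<longrightarrow> s \<le> t \<longrightarrow>
            InvJ j (uniform_mallows n U s \<omega>) \<le> InvJ j (uniform_mallows n U t \<omega>)) \<and>
          (\<forall>t\<ge>0. Inv n (uniform_mallows n U t \<omega>)
                 \<le> Inv n (left_lim (\<lambda>s. uniform_mallows n U s \<omega>) t) + 1)"
      using AE_good' AE_nosim
    proof (eventually_elim)
      case (elim \<omega>)
      then show ?case using X_mono[OF elim(1)] Inv_jump[OF elim(1) elim(2)] by blast
    qed
  next
    show "indep_vars (\<lambda>_. PiM {0..} (\<lambda>_. count_space UNIV))
        (\<lambda>j \<omega>. restrict (\<lambda>t. InvJ j (uniform_mallows n U t \<omega>)) {0..}) {1..n}"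
      by (rule indep_paths)
  qed
qed


end
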